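(* Let $T$, $S$, $A$ be closed Hermitian subspaces in $X^2$ with $D(T)=D(S)=:D\subset D(A)$ and $T=S+A$, and assume $\rho(T)\cap\rho(S)\neq\emptyset$. (i) If $A_s$ restricted to $D$ is a finite rank operator, then $T$ is a finite rank perturbation of $S$. (ii) If $T$ is a finite rank perturbation of $S$ and $T(0)^\perp$ reduces both $S$ and $A$, then $A_s$ restricted to $D$ is a finite rank operator.
   Context: $X$ is a complex Hilbert space and $X^2=X\times X$ carries the inner product $\langle (x,f),(y,g)\rangle=\langle x,y\rangle+\langle f,g\rangle$. A subspace $T$ in $X^2$ means a linear subspace of $X^2$ (a linear relation); a linear operator in $X$ is identified with its graph. Notation: $D(T)=\{x:(x,f)\in T \text{ for some } f\}$, $T(x)=\{f:(x,f)\in T\}$, $T^{-1}=\{(f,x):(x,f)\in T\}$, $\lambda I$ is the graph of $x\mapsto \lambda x$. The adjoint is $T^*=\{(y,g)\in X^2:\langle g,x\rangle=\langle y,f\rangle \text{ for all }(x,f)\in T\}$; $T$ is Hermitian if $T\subset T^*$. For subspaces $S,A$ in $X^2$, $S+A=\{(x,f+g):(x,f)\in S,(x,g)\in A\}$. For a closed subspace $T$, set $T_\infty=\{(0,g)\in X^2:(0,g)\in T\}$ and $T_s=T\ominus T_\infty$ (orthogonal complement of $T_\infty$ in $T$), so $T=T_s\oplus T_\infty$; $T_s$ is the graph of a linear operator (the operator part of $T$) with $D(T_s)=D(T)$ and $R(T_s)\subset T(0)^\perp$. Resolvent set: $\rho(T)=\{\lambda\in\mathbb C:(\lambda I-T)^{-1}$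 is a bounded linear operator defined on all of $X\}$. Reducing subspace: a closed subspace $X_1\subset X$ with orthogonal projection $P$ onto it reduces $T$ if $\{(Px,Pf):(x,f)\in T\}\subset T$. Finite rank perturbation: for closed subspaces $T,S$ in $X^2$ with orthogonal projections $P_T,P_S$ of $X^2$ onto $T$, $S$, $T$ is a finite rank perturbation of $S$ if $P_T-P_S$ has finite-dimensional range. *)

theory Defs
  imports Complex_Main
begin

class complex_vector = real_vector +
  fixes scaleC :: "complex \<Rightarrow> 'a \<Rightarrow> 'a" (infixr \<open>*\<^sub>C\<close> 75)
  assumes scaleC_add_right: "a *\<^sub>C (x + y) = a *\<^sub>C x + a *\<^sub>C y"
    and scaleC_add_left: "(a + b) *\<^sub>C x = a *\<^sub>C x + b *\<^sub>C x"
    and scaleC_scaleC: "a *\<^sub>C (b *\<^sub>C x) = (a * b) *\<^sub>C x"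
    and scaleC_one: "1 *\<^sub>C x = x"
    and scaleR_scaleC: "scaleR r = scaleC (complex_of_real r)"

class complex_inner = complex_vector + real_normed_vector +
  fixes cinner :: "'a \<Rightarrow> 'a \<Rightarrow> complex"
  assumes cinner_commute: "cinner x y = cnj (cinner y x)"
    and cinner_add_left: "cinner (x + y) z = cinner x z + cinner y z"
    and cinner_scaleC_left: "cinner (r *\<^sub>C x) y = cnj r * cinner x y"
    and cinner_ge_zero: "0 \<le> Re (cinner x x)"
    and cinner_eq_zero_iff: "cinner x x = 0 \<longleftrightarrow> x = 0"
    and norm_eq_sqrt_cinner: "norm x = sqrt (Re (cinner x x))"

class chilbert_space = complex_inner + complete_space

definition ip2 :: "('a::complex_inner \<times> 'a) \<Rightarrow> ('a \<times> 'a) \<Rightarrow> complex" where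
  "ip2 z w = cinner (fst z) (fst w) + cinner (snd z) (snd w)"

definition is_subspace1 :: "'a::complex_inner set \<Rightarrow> bool" where
  "is_subspace1 M \<longleftrightarrow> 0 \<in> M \<and> (\<forall>x\<in>M. \<forall>y\<in>M. x + y \<in> M) \<and> (\<forall>c. \<forall>x\<in>M. c *\<^sub>C x \<in> M)"

definition is_subspace2 :: "('a::complex_inner \<times> 'a) set \<Rightarrow> bool" where
  "is_subspace2 T \<longleftrightarrow> (0, 0) \<in> T
     \<and> (\<forall>z\<in>T. \<forall>w\<in>T. (fst z + fst w, snd z + snd w) \<in> T)
     \<and> (\<forall>c. \<forall>z\<in>T. (c *\<^sub>C fst z, c *\<^sub>C snd z) \<in> T)"

definition closed_subspace2 :: "('a::complex_inner \<times> 'a) set \<Rightarrow> bool" where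
  "closed_subspace2 T \<longleftrightarrow> is_subspace2 T \<and> closed T"

definition rel_dom :: "('a \<times> 'a) set \<Rightarrow> 'a set" where
  "rel_dom T = {x. \<exists>f. (x, f) \<in> T}"

definition rel_app :: "('a \<times> 'a) set \<Rightarrow> 'a \<Rightarrow> 'a set" where
  "rel_app T x = {f. (x, f) \<in> T}"

definition rel_adjoint :: "('a::complex_inner \<times> 'a) set \<Rightarrow> ('a \<times> 'a) set" where
  "rel_adjoint T = {(y, g). \<forall>(x, f)\<in>T. cinner g x = cinner y f}"

definition hermitian :: "('a::complex_inner \<times> 'a) set \<Rightarrow> bool" where
  "hermitian T \<longleftrightarrow> T \<subseteq> rel_adjoint T"

definition rel_sum :: "('a::complex_inner \<times> 'a) set \<Rightarrow> ('a \<times> 'a) set \<Rightarrow> ('a \<times> 'a) set" where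
  "rel_sum S A = {(x, f + g) | x f g. (x, f) \<in> S \<and> (x, g) \<in> A}"

definition mult_part :: "('a::complex_inner \<times> 'a) set \<Rightarrow> ('a \<times> 'a) set" where
  "mult_part T = {(0, g) | g. (0, g) \<in> T}"

text \<open>Operator part T_s = T minus (orthogonally) T_infinity.\<close>
definition op_part :: "('a::complex_inner \<times> 'a) set \<Rightarrow> ('a \<times> 'a) set" where
  "op_part T = {z \<in> T. \<forall>w\<in>mult_part T. ip2 z w = 0}"

definition single_valued_rel :: "('a \<times> 'a) set \<Rightarrow> bool" where
  "single_valued_rel R \<longleftrightarrow> (\<forall>x f g. (x, f) \<in> R \<and> (x, g) \<in> R \<longrightarrow> f = g)"

text \<open>lambda is in the resolvent set iff (lambda I - T)^{-1} is a bounded linear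
  operator defined on all of X.\<close>
definition resolvent_set :: "('a::complex_inner \<times> 'a) set \<Rightarrow> complex set" where
  "resolvent_set T = {l. let R = {(l *\<^sub>C x - f, x) | x f. (x, f) \<in> T} in
      single_valued_rel R \<and> rel_dom R = UNIV \<and>
      (\<exists>C. \<forall>(y, x)\<in>R. norm x \<le> C * norm y)}"

definition orth_proj1 :: "'a::complex_inner set \<Rightarrow> 'a \<Rightarrow> 'a" where
  "orth_proj1 M x = (THE p. p \<in> M \<and> (\<forall>m\<in>M. cinner (x - p) m = 0))"

definition orth_proj2 :: "('a::complex_inner \<times> 'a) set \<Rightarrow> ('a \<times> 'a) \<Rightarrow> ('a \<times> 'a)" where
  "orth_proj2 T z = (THE p. p \<in> T \<and> (\<forall>m\<in>T. ip2 (fst z - fst p, snd z - snd p) m = 0))"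

definition orth_compl1 :: "'a::complex_inner set \<Rightarrow> 'a set" where
  "orth_compl1 M = {y. \<forall>g\<in>M. cinner y g = 0}"

definition fin_dim1 :: "'a::complex_inner set \<Rightarrow> bool" where
  "fin_dim1 V \<longleftrightarrow> (\<exists>B. finite B \<and> V \<subseteq> {\<Sum>b\<in>B. c b *\<^sub>C b | c. True})"

definition fin_dim2 :: "('a::complex_inner \<times> 'a) set \<Rightarrow> bool" where
  "fin_dim2 V \<longleftrightarrow> (\<exists>B. finite B \<and>
     V \<subseteq> {(\<Sum>b\<in>B. c b *\<^sub>C fst b, \<Sum>b\<in>B. c b *\<^sub>C snd b) | c. True})"

definition finite_rank_perturbation :: "('a::complex_inner \<times> 'a) set \<Rightarrow> ('a \<times> 'a) set \<Rightarrow> bool" where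
  "finite_rank_perturbation T S \<longleftrightarrow>
     fin_dim2 (range (\<lambda>z. (fst (orth_proj2 T z) - fst (orth_proj2 S z),
                            snd (orth_proj2 T z) - snd (orth_proj2 S z))))"

definition rel_restrict :: "('a \<times> 'a) set \<Rightarrow> 'a set \<Rightarrow> ('a \<times> 'a) set" where
  "rel_restrict R D = {z \<in> R. fst z \<in> D}"

definition finite_rank_operator :: "('a::complex_inner \<times> 'a) set \<Rightarrow> bool" where
  "finite_rank_operator R \<longleftrightarrow> single_valued_rel R \<and> fin_dim1 (snd ` R)"

definition reduces :: "'a::complex_inner set \<Rightarrow> ('a \<times> 'a) set \<Rightarrow> bool" where
  "reduces M T \<longleftrightarrow> is_subspace1 M \<and> closed M \<and>
     (\<forall>(x, f)\<in>T. (orth_proj1 M x, orth_proj1 M f) \<in> T)"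

end

theory Submission
  imports Defs "HOL-Analysis.Product_Vector"
begin


lemma scaleC_zero_left[simp]: "0 *\<^sub>C (x::'a::complex_vector) = 0"
  by (metis scaleR_scaleC scale_zero_left of_real_0)

interpretation cv: vector_space "scaleC :: complex \<Rightarrow> 'a \<Rightarrow> 'a::complex_vector"
  by unfold_locales (simp_all add: scaleC_add_right scaleC_add_left scaleC_scaleC scaleC_one)

lemma cinner_zero_left[simp]: "cinner 0 y = 0"
  using cinner_add_left[of 0 0 y] by simp
lemma cinner_zero_right[simp]: "cinner x 0 = 0"
  by (metis cinner_commute cinner_zero_left complex_cnj_zero)
lemma cinner_add_right: "cinner x (y+z) = cinner x y + cinner x z"
  by (metis cinner_commute cinner_add_left complex_cnj_add)
lemma cinner_scaleC_right: "cinner x (r *\<^sub>C y) = r * cinner x y"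
  by (metis cinner_commute cinner_scaleC_left complex_cnj_cnj complex_cnj_mult)
lemma cinner_minus_left: "cinner (-x) y = - cinner x y"
  using cinner_add_left[of "-x" x y] by (simp add: eq_neg_iff_add_eq_0)
lemma cinner_minus_right: "cinner x (-y) = - cinner x y"
  by (metis cinner_commute cinner_minus_left complex_cnj_minus)
lemma cinner_diff_left: "cinner (x - y) z = cinner x z - cinner y z"
  by (simp only: diff_conv_add_uminus cinner_add_left cinner_minus_left)
lemma cinner_diff_right: "cinner x (y - z) = cinner x y - cinner x z"
  by (simp only: diff_conv_add_uminus cinner_add_right cinner_minus_right)

lemma cinner_self_eq: "cinner x x = complex_of_real ((norm x)^2)"
proof -
  have "Im (cinner x x) = Im (cnj (cinner x x))" using cinner_commute[of x x] by simp
  then have "Im (cinner x x) = 0" by simp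
  moreover have "(norm x)^2 = Re (cinner x x)"
    using norm_eq_sqrt_cinner[of x] cinner_ge_zero[of x] by simp
  ultimately show ?thesis by (simp add: complex_eq_iff)
qed

lemma norm_sq_cinner: "(norm x)^2 = Re (cinner x x)"
  using cinner_self_eq[of x] by simp

lemma cinner_self_zero: "cinner x x = 0 \<Longrightarrow> x = 0"
  using cinner_eq_zero_iff by blast

lemma norm_scaleC: "norm (c *\<^sub>C (x::'a::complex_inner)) = cmod c * norm x"
proof -
  have "cinner (c *\<^sub>C x) (c *\<^sub>C x) = (c * cnj c) * cinner x x"
    by (simp add: cinner_scaleC_left cinner_scaleC_right)
  also have "\<dots> = complex_of_real ((cmod c)^2 * (norm x)^2)"
    by (simp only: cinner_self_eq complex_norm_square[symmetric] of_real_mult of_real_power)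
  finally have "(norm (c *\<^sub>C x))^2 = (cmod c * norm x)^2"
    by (simp add: norm_sq_cinner power_mult_distrib)
  then show ?thesis by (simp add: power2_eq_iff_nonneg)
qed

lemma norm_add_sq: "(norm (x+y))^2 = (norm x)^2 + (norm y)^2 + 2 * Re (cinner x y)"
proof -
  have "Re (cinner y x) = Re (cnj (cinner x y))" using cinner_commute[of y x] by simp
  then have 1: "Re (cinner y x) = Re (cinner x y)" by simp
  have "cinner (x+y) (x+y) = cinner x x + cinner x y + (cinner y x + cinner y y)"
    by (simp add: cinner_add_left cinner_add_right ac_simps)
  then have "Re (cinner (x+y) (x+y)) = Re (cinner x x) + Re (cinner y y) + 2 * Re (cinner x y)"
    using 1 by (simp only: plus_complex.sel)
  moreover have "(norm (x+y))^2 = Re (cinner (x+y) (x+y))" "(norm x)^2 = Re (cinner x x)"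
     "(norm y)^2 = Re (cinner y y)" by (rule norm_sq_cinner)+
  ultimately show ?thesis by linarith
qed

lemma norm_diff_sq: "(norm (x-y))^2 = (norm x)^2 + (norm y)^2 - 2 * Re (cinner x y)"
proof -
  have "(norm (x - y))^2 = (norm x)^2 + (norm y)^2 + 2 * Re (cinner x (-y))"
    using norm_add_sq[of x "-y"] by (simp only: diff_conv_add_uminus[symmetric] norm_minus_cancel)
  moreover have "Re (cinner x (-y)) = - Re (cinner x y)" by (simp add: cinner_minus_right)
  ultimately show ?thesis by linarith
qed

lemma subspace1_add: "is_subspace1 M \<Longrightarrow> x \<in> M \<Longrightarrow> y \<in> M \<Longrightarrow> x + y \<in> M"
  unfolding is_subspace1_def by blast
lemma subspace1_scale: "is_subspace1 M \<Longrightarrow> x \<in> M \<Longrightarrow> c *\<^sub>C x \<in> M"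
  unfolding is_subspace1_def by blast
lemma subspace1_zero: "is_subspace1 M \<Longrightarrow> 0 \<in> M"
  unfolding is_subspace1_def by blast
lemma subspace1_minus: "is_subspace1 M \<Longrightarrow> x \<in> M \<Longrightarrow> - x \<in> M"
  using subspace1_scale[of M x "-1"] by (simp add: cv.scale_minus_left scaleC_one)
lemma subspace1_diff: "is_subspace1 M \<Longrightarrow> x \<in> M \<Longrightarrow> y \<in> M \<Longrightarrow> x - y \<in> M"
  using subspace1_add[of M x "-y"] subspace1_minus[of M y] by simp
lemma subspace1_scaleR: "is_subspace1 M \<Longrightarrow> x \<in> M \<Longrightarrow> r *\<^sub>R x \<in> M"
  using subspace1_scale[of M x "complex_of_real r"] by (simp add: scaleR_scaleC)

lemma cnj_mult_self: "cnj z * z = complex_of_real ((cmod z)^2)"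
  by (subst mult.commute) (rule complex_norm_square[symmetric])

lemma parallelogram: "(norm ((a::'a::complex_inner)+b))^2 + (norm (a-b))^2 = 2 * (norm a)^2 + 2 * (norm b)^2"
  using norm_add_sq[of a b] norm_diff_sq[of a b] by simp

lemma proj_exists:
  fixes M :: "'a::chilbert_space set" and x :: 'a
  assumes sub: "is_subspace1 M" and cl: "closed M"
  shows "\<exists>p\<in>M. \<forall>q\<in>M. cinner (x - p) q = 0"
proof -
  define d where "d = Inf ((\<lambda>m. norm (x - m)) ` M)"
  have ne: "M \<noteq> {}" using subspace1_zero[OF sub] by auto
  have bdd: "bdd_below ((\<lambda>m. norm (x - m)) ` M)" by (rule bdd_belowI[of _ 0]) auto
  have dle: "d \<le> norm (x - m)" if "m \<in> M" for m
    unfolding d_def using bdd that by (simp add: cInf_lower)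
  have d0: "0 \<le> d" unfolding d_def using ne by (auto intro!: cInf_greatest)
  have "\<forall>n. \<exists>m\<in>M. norm (x - m) < d + 1/(real n + 1)"
  proof
    fix n
    have "d < d + 1/(real n+1)" by simp
    then have "\<exists>z\<in>(\<lambda>m. norm (x - m)) ` M. z < d + 1/(real n+1)"
      unfolding d_def using ne by (intro cInf_lessD) auto
    then show "\<exists>m\<in>M. norm (x-m) < d + 1/(real n+1)" by auto
  qed
  then obtain m where mM: "\<And>n. m n \<in> M" and mlt: "\<And>n. norm (x - m n) < d + 1/(real n+1)"
    by metis
  have est: "(norm (m n - m k))^2 \<le> 2*((norm (x - m n))^2 - d^2) + 2*((norm (x - m k))^2 - d^2)" for n k
  proof -
    define mid where "mid = (1/2) *\<^sub>R (m n + m k)"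
    have midM: "mid \<in> M" unfolding mid_def using mM sub subspace1_add subspace1_scaleR by blast
    have "(x - m n) + (x - m k) = 2 *\<^sub>R (x - mid)"
      unfolding mid_def by (simp add: algebra_simps scaleR_2)
    then have e1: "norm ((x - m n) + (x - m k)) = 2 * norm (x - mid)" by simp
    have "d \<le> norm (x - mid)" using dle midM by simp
    then have "4 * d^2 \<le> (norm ((x - m n) + (x - m k)))^2" using e1 d0
      by (simp add: power_mono power_mult_distrib)
    moreover have "(x - m n) - (x - m k) = m k - m n" by simp
    moreover have "norm (m k - m n) = norm (m n - m k)" by (rule norm_minus_commute)
    ultimately show ?thesis using parallelogram[of "x - m n" "x - m k"] by simp
  qed
  have small: "\<exists>N. \<forall>n\<ge>N. (norm (x - m n))^2 - d^2 < e" if "e > 0" for e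
  proof -
    obtain N::nat where N: "(2*d+1)/e < real N" using reals_Archimedean2 by blast
    have "(norm (x - m n))^2 - d^2 < e" if "n \<ge> N" for n
    proof -
      have a: "0 \<le> norm (x - m n)" by simp
      have "(norm (x - m n))^2 \<le> (d + 1/(real n+1))^2"
        using mlt[of n] a by (intro power_mono) auto
      also have "\<dots> = d^2 + (2*d + 1/(real n+1)) * (1/(real n+1))"
        by (simp add: power2_eq_square algebra_simps)
      also have "(2*d + 1/(real n+1)) * (1/(real n+1)) \<le> (2*d+1) * (1/(real n + 1))"
        by (intro mult_right_mono) auto
      also have "(2*d+1) * (1/(real n + 1)) < e"
      proof -
        have "(2*d+1)/e < real n + 1" using N that by simp
        then show ?thesis using \<open>e > 0\<close> by (simp add: field_simps)
      qed
      finally show ?thesis by simp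
    qed
    then show ?thesis by blast
  qed
  have "Cauchy m"
  proof (rule metric_CauchyI)
    fix e :: real assume "e > 0"
    then have "e^2/4 > 0" by simp
    from small[OF this] obtain N where N: "\<And>n. n \<ge> N \<Longrightarrow> (norm (x - m n))^2 - d^2 < e^2/4" by blast
    have "dist (m a) (m b) < e" if "a \<ge> N" "b \<ge> N" for a b
    proof -
      have "(norm (m a - m b))^2 < e^2"
        using est[of a b] N[OF that(1)] N[OF that(2)] by simp
      then have "norm (m a - m b) < e" using \<open>e > 0\<close>
        by (simp add: power_less_imp_less_base)
      then show ?thesis by (simp add: dist_norm)
    qed
    then show "\<exists>N. \<forall>a\<ge>N. \<forall>b\<ge>N. dist (m a) (m b) < e" by blast
  qed
  then obtain p where lim: "m \<longlonglongrightarrow> p" using Cauchy_convergent convergent_def by blast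
  have pM: "p \<in> M" using closed_sequentially[OF cl] mM lim by blast
  have "norm (x - p) \<le> d"
  proof (rule LIMSEQ_le)
    show "(\<lambda>n. norm (x - m n)) \<longlonglongrightarrow> norm (x - p)" by (intro tendsto_intros lim)
    show "(\<lambda>n. d + 1/(real n + 1)) \<longlonglongrightarrow> d"
      using tendsto_add[OF tendsto_const LIMSEQ_inverse_real_of_nat] 
      by (simp add: inverse_eq_divide add.commute)
    show "\<exists>N. \<forall>n\<ge>N. norm (x - m n) \<le> d + 1/(real n + 1)" using mlt less_imp_le by blast
  qed
  then have pmin: "norm (x - p) \<le> norm (x - q)" if "q \<in> M" for q using dle[OF that] by linarith
  have "cinner (x - p) q = 0" if qM: "q \<in> M" for q
  proof (rule ccontr)
    assume a0: "cinner (x - p) q \<noteq> 0"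
    define a where "a = cinner (x - p) q"
    define e where "e = x - p"
    define s where "s = 1 / ((norm q)^2 + 1)"
    define t where "t = complex_of_real s * cnj a"
    have q1: "0 < (norm q)^2 + 1" by (simp add: add_nonneg_pos)
    have s0: "s > 0" unfolding s_def using q1 by simp
    have "cinner e (t *\<^sub>C q) = t * a" unfolding e_def a_def by (rule cinner_scaleC_right)
    also have "\<dots> = complex_of_real s * (cnj a * a)" unfolding t_def by (simp only: mult.assoc)
    also have "\<dots> = complex_of_real (s * (cmod a)^2)" by (simp only: cnj_mult_self of_real_mult)
    finally have ip: "cinner e (t *\<^sub>C q) = complex_of_real (s * (cmod a)^2)" .
    have "p + t *\<^sub>C q \<in> M" using pM qM sub subspace1_add subspace1_scale by blast
    then have "norm e \<le> norm (e - t *\<^sub>C q)" using pmin unfolding e_def by (simp add: algebra_simps)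
    then have "(norm e)^2 \<le> (norm (e - t *\<^sub>C q))^2" by (simp add: power_mono)
    also have "\<dots> = (norm e)^2 + (norm (t *\<^sub>C q))^2 - 2 * Re (cinner e (t *\<^sub>C q))"
      by (rule norm_diff_sq)
    also have "cinner e (t *\<^sub>C q) = complex_of_real (s * (cmod a)^2)"
      by (fact ip)
    also have "norm (t *\<^sub>C q) = s * cmod a * norm q"
      unfolding norm_scaleC t_def using s0 by (simp add: norm_mult abs_of_pos)
    finally have "2 * (s * (cmod a)^2) \<le> (s * cmod a * norm q)^2" by simp
    then have "2 * (s * (cmod a)^2) \<le> s * (cmod a)^2 * (s * (norm q)^2)"
      by (simp add: power_mult_distrib power2_eq_square mult_ac)
    moreover have "s * (cmod a)^2 > 0" using s0 a0 unfolding a_def by simp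
    ultimately have "2 \<le> s * (norm q)^2"
      by (metis mult_le_cancel_left_pos mult.commute mult.right_neutral)
    moreover have "s * (norm q)^2 < 1" unfolding s_def using q1 by (simp add: field_simps)
    ultimately show False by simp
  qed
  then show ?thesis using pM by blast
qed

lemma proj_unique:
  fixes M :: "'a::complex_inner set"
  assumes sub: "is_subspace1 M" and "p \<in> M" "\<forall>q\<in>M. cinner (x - p) q = 0"
    and "p' \<in> M" "\<forall>q\<in>M. cinner (x - p') q = 0"
  shows "p = p'"
proof -
  have pq: "p - p' \<in> M" using assms subspace1_diff by blast
  have "cinner (x - p') (p - p') - cinner (x - p) (p - p') = 0" using assms pq by simp
  then have "cinner ((x - p') - (x - p)) (p - p') = 0" by (simp add: cinner_diff_left)
  then have "cinner (p - p') (p - p') = 0" by simp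
  then show ?thesis using cinner_self_zero by fastforce
qed

lemma orth_proj1:
  fixes M :: "'a::chilbert_space set"
  assumes "is_subspace1 M" "closed M"
  shows "orth_proj1 M x \<in> M" "\<forall>q\<in>M. cinner (x - orth_proj1 M x) q = 0"
proof -
  have "\<exists>!p. p \<in> M \<and> (\<forall>q\<in>M. cinner (x - p) q = 0)"
    using proj_exists[OF assms, of x] proj_unique[OF assms(1)] by blast
  then have "orth_proj1 M x \<in> M \<and> (\<forall>q\<in>M. cinner (x - orth_proj1 M x) q = 0)"
    unfolding orth_proj1_def by (rule theI')
  then show "orth_proj1 M x \<in> M" "\<forall>q\<in>M. cinner (x - orth_proj1 M x) q = 0" by auto
qed

lemma orth_proj1_eq:
  fixes M :: "'a::chilbert_space set"
  assumes "is_subspace1 M" "closed M" "p \<in> M" "\<forall>q\<in>M. cinner (x - p) q = 0"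
  shows "orth_proj1 M x = p"
  using proj_unique[OF assms(1) orth_proj1[OF assms(1,2)] assms(3,4)] by simp

instantiation prod :: (complex_vector, complex_vector) complex_vector
begin
definition scaleC_prod_def: "scaleC c x = (scaleC c (fst x), scaleC c (snd x))"
instance
proof
  fix a b :: complex and x y :: "'a \<times> 'b" and r :: real
  show "a *\<^sub>C (x + y) = a *\<^sub>C x + a *\<^sub>C y"
    by (simp add: scaleC_prod_def scaleC_add_right)
  show "(a + b) *\<^sub>C x = a *\<^sub>C x + b *\<^sub>C x"
    by (simp add: scaleC_prod_def scaleC_add_left)
  show "a *\<^sub>C b *\<^sub>C x = (a * b) *\<^sub>C x"
    by (simp add: scaleC_prod_def scaleC_scaleC)
  show "1 *\<^sub>C x = x"
    by (simp add: scaleC_prod_def scaleC_one)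
  show "((*\<^sub>R) r :: 'a \<times> 'b \<Rightarrow> _) = (*\<^sub>C) (complex_of_real r)"
    by (rule ext) (simp add: scaleR_prod_def scaleC_prod_def scaleR_scaleC)
qed
end

lemma fst_scaleC[simp]: "fst (c *\<^sub>C z) = c *\<^sub>C fst z" by (simp add: scaleC_prod_def)
lemma snd_scaleC[simp]: "snd (c *\<^sub>C z) = c *\<^sub>C snd z" by (simp add: scaleC_prod_def)

instantiation prod :: (complex_inner, complex_inner) complex_inner
begin
definition cinner_prod_def: "cinner x y = cinner (fst x) (fst y) + cinner (snd x) (snd y)"
instance
proof
  fix x y z :: "'a \<times> 'b" and r :: complex
  show "cinner x y = cnj (cinner y x)"
  proof -
    have c1: "cinner (fst x) (fst y) = cnj (cinner (fst y) (fst x))" by (rule cinner_commute)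
    have c2: "cinner (snd x) (snd y) = cnj (cinner (snd y) (snd x))" by (rule cinner_commute)
    show ?thesis unfolding cinner_prod_def complex_cnj_add c1 c2 by (rule refl)
  qed
  show "cinner (x + y) z = cinner x z + cinner y z"
    unfolding cinner_prod_def by (simp only: fst_add snd_add cinner_add_left add_ac)
  show "cinner (r *\<^sub>C x) y = cnj r * cinner x y"
    unfolding cinner_prod_def by (simp only: fst_scaleC snd_scaleC cinner_scaleC_left distrib_left)
  have e: "cinner x x = complex_of_real ((norm (fst x))^2 + (norm (snd x))^2)"
    unfolding cinner_prod_def by (simp add: cinner_self_eq)
  show "0 \<le> Re (cinner x x)" unfolding e by simp
  show "(cinner x x = 0) = (x = 0)"
  proof
    assume "cinner x x = 0"
    then have "(norm (fst x))^2 + (norm (snd x))^2 = 0" unfolding e by (simp only: of_real_eq_0_iff)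
    moreover have "0 \<le> (norm (fst x))^2" "0 \<le> (norm (snd x))^2" by simp_all
    ultimately have "(norm (fst x))^2 = 0" "(norm (snd x))^2 = 0" by linarith+
    then have "fst x = 0" "snd x = 0" by simp_all
    then show "x = 0" by (simp add: prod_eq_iff)
  next
    assume "x = 0" then show "cinner x x = 0" unfolding e by simp
  qed
  show "norm x = sqrt (Re (cinner x x))" unfolding e norm_prod_def by simp
qed
end

instance prod :: (chilbert_space, chilbert_space) chilbert_space ..

lemma pair_plus: "(fst z + fst w, snd z + snd w) = z + w" by (simp add: prod_eq_iff)
lemma pair_minus: "(fst z - fst w, snd z - snd w) = z - w" by (simp add: prod_eq_iff)
lemma pair_scaleC: "(c *\<^sub>C fst z, c *\<^sub>C snd z) = c *\<^sub>C z" by (simp add: prod_eq_iff)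

lemma ip2_cinner: "ip2 z w = cinner z w"
  unfolding ip2_def cinner_prod_def by simp

lemma subspace2_iff: "is_subspace2 T \<longleftrightarrow> is_subspace1 T"
  unfolding is_subspace2_def is_subspace1_def pair_plus pair_scaleC zero_prod_def ..

lemma subspace1_cv: "is_subspace1 M \<longleftrightarrow> cv.subspace M"
  unfolding is_subspace1_def cv.subspace_def by simp

lemma orth_proj2_eq: "orth_proj2 T z = orth_proj1 T z"
  unfolding orth_proj2_def orth_proj1_def ip2_cinner pair_minus ..

lemma fin_dim1_span: "fin_dim1 (V::'a::complex_inner set) \<longleftrightarrow> (\<exists>B. finite B \<and> V \<subseteq> cv.span B)"
proof -
  have eq: "{\<Sum>b\<in>B. c b *\<^sub>C b | c. True} = cv.span B" if "finite B" for B :: "'a set"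
    unfolding cv.span_finite[OF that] by (simp add: image_def)
  show ?thesis
  proof
    assume "fin_dim1 V"
    then obtain B where B: "finite B" "V \<subseteq> {\<Sum>b\<in>B. c b *\<^sub>C b | c. True}"
      unfolding fin_dim1_def by blast
    then show "\<exists>B. finite B \<and> V \<subseteq> cv.span B" using eq[OF B(1)] by blast
  next
    assume "\<exists>B. finite B \<and> V \<subseteq> cv.span B"
    then obtain B where B: "finite B" "V \<subseteq> cv.span B" by blast
    then show "fin_dim1 V" unfolding fin_dim1_def using eq[OF B(1)] by blast
  qed
qed

lemma fin_dim2_iff: "fin_dim2 V \<longleftrightarrow> fin_dim1 V"
proof -
  have "(\<Sum>b\<in>B. c b *\<^sub>C b) = (\<Sum>b\<in>B. c b *\<^sub>C fst b, \<Sum>b\<in>B. c b *\<^sub>C snd b)"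
    for B and c :: "'a \<times> 'a \<Rightarrow> complex"
    by (simp add: prod_eq_iff fst_sum snd_sum)
  then show ?thesis unfolding fin_dim2_def fin_dim1_def by simp
qed

lemma lin_sum:
  fixes f :: "'a::complex_vector \<Rightarrow> 'b::complex_vector"
  assumes sub: "cv.subspace V"
    and add: "\<And>x y. x\<in>V \<Longrightarrow> y\<in>V \<Longrightarrow> f (x+y) = f x + f y"
    and sc: "\<And>c x. x\<in>V \<Longrightarrow> f (c *\<^sub>C x) = c *\<^sub>C f x"
  shows "finite s \<Longrightarrow> s \<subseteq> V \<Longrightarrow> (\<Sum>v\<in>s. u v *\<^sub>C v) \<in> V \<and> f (\<Sum>v\<in>s. u v *\<^sub>C v) = (\<Sum>v\<in>s. u v *\<^sub>C f v)"
proof (induction s rule: finite_induct)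
  case empty
  have "f 0 = 0" using sc[of 0 0] sub by (simp add: cv.subspace_0)
  then show ?case using sub by (simp add: cv.subspace_0)
next
  case (insert a s)
  then have aV: "a \<in> V" and IH: "(\<Sum>v\<in>s. u v *\<^sub>C v) \<in> V \<and> f (\<Sum>v\<in>s. u v *\<^sub>C v) = (\<Sum>v\<in>s. u v *\<^sub>C f v)"
    by auto
  have uaV: "u a *\<^sub>C a \<in> V" using aV sub by (simp add: cv.subspace_scale)
  show ?case using insert.hyps IH uaV add[OF uaV] sc[OF aV] sub
    by (simp add: cv.subspace_add)
qed

lemma fin_dim_inj:
  fixes f :: "'a::complex_vector \<Rightarrow> 'b::complex_vector"
  assumes sub: "cv.subspace V"
    and add: "\<And>x y. x\<in>V \<Longrightarrow> y\<in>V \<Longrightarrow> f (x+y) = f x + f y"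
    and sc: "\<And>c x. x\<in>V \<Longrightarrow> f (c *\<^sub>C x) = c *\<^sub>C f x"
    and inj: "\<And>x. x \<in> V \<Longrightarrow> f x = 0 \<Longrightarrow> x = 0"
    and fB: "finite B" and img: "f ` V \<subseteq> cv.span B"
  shows "\<exists>C. finite C \<and> V \<subseteq> cv.span C"
proof -
  obtain C where CV: "C \<subseteq> V" and indC: "cv.independent C" and VC: "V \<subseteq> cv.span C"
    and "card C = cv.dim V"
    by (rule cv.basis_exists)
  have fdiff: "f (x - y) = f x - f y" if "x \<in> V" "y \<in> V" for x y
  proof -
    have d: "x - y \<in> V" using cv.subspace_diff[OF sub that] .
    have "f x = f ((x - y) + y)" by simp
    also have "\<dots> = f (x - y) + f y" using add[OF d that(2)] .
    finally show ?thesis by (simp add: algebra_simps)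
  qed
  have injC: "inj_on f C"
  proof (rule inj_onI)
    fix x y assume xy: "x \<in> C" "y \<in> C" "f x = f y"
    then have xyV: "x \<in> V" "y \<in> V" using CV by auto
    have "f (x - y) = 0" using fdiff[OF xyV] xy(3) by simp
    then have "x - y = 0" using inj cv.subspace_diff[OF sub xyV] by blast
    then show "x = y" by simp
  qed
  have indf: "cv.independent (f ` C)"
    unfolding cv.independent_explicit_module
  proof (intro allI impI)
    fix t u w
    assume t: "finite t" "t \<subseteq> f ` C" and sum0: "(\<Sum>v\<in>t. u v *\<^sub>C v) = 0" and wt: "w \<in> t"
    define t' where "t' = {c \<in> C. f c \<in> t}"
    have tt': "t = f ` t'" unfolding t'_def using t by auto
    have injt': "inj_on f t'" using injC unfolding t'_def by (rule inj_on_subset) auto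
    have fint': "finite t'" using t tt' injt' finite_imageD by blast
    have t'V: "t' \<subseteq> V" using CV unfolding t'_def by auto
    have "(\<Sum>v\<in>t. u v *\<^sub>C v) = (\<Sum>c\<in>t'. u (f c) *\<^sub>C f c)"
      unfolding tt' using injt' by (simp add: sum.reindex)
    also have "\<dots> = f (\<Sum>c\<in>t'. u (f c) *\<^sub>C c)"
      using lin_sum[OF sub add sc fint' t'V, of "\<lambda>c. u (f c)"] by simp
    finally have "f (\<Sum>c\<in>t'. u (f c) *\<^sub>C c) = 0" using sum0 by simp
    moreover have "(\<Sum>c\<in>t'. u (f c) *\<^sub>C c) \<in> V"
      using lin_sum[OF sub add sc fint' t'V, of "\<lambda>c. u (f c)"] by simp
    ultimately have "(\<Sum>c\<in>t'. u (f c) *\<^sub>C c) = 0" using inj by blast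
    moreover obtain c where "c \<in> t'" "w = f c" using wt tt' by blast
    moreover have "t' \<subseteq> C" unfolding t'_def by auto
    ultimately show "u w = 0" using cv.independentD[OF indC fint', where u="\<lambda>c. u (f c)"] by auto
  qed
  have "f ` C \<subseteq> cv.span B" using img CV by blast
  then have "finite (f ` C)" using cv.independent_span_bound[OF fB indf] by blast
  then have "finite C" using injC finite_imageD by blast
  then show ?thesis using VC by blast
qed



lemma scaleC_Pair[simp]: "c *\<^sub>C (a, b) = (c *\<^sub>C a, c *\<^sub>C b)"
  by (simp add: scaleC_prod_def)
lemma cinner_Pair[simp]: "cinner (a, b) (c, d) = cinner a c + cinner b d"
  by (simp add: cinner_prod_def)
lemma Pair_zero: "(0, 0) = (0 :: 'a::zero \<times> 'b::zero)"
  by (simp add: zero_prod_def)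

lemma orth_proj1_id:
  fixes M :: "'a::chilbert_space set"
  assumes "is_subspace1 M" "closed M" "p \<in> M"
  shows "orth_proj1 M p = p"
  using orth_proj1_eq[OF assms] by simp

lemma orth_proj1_add:
  fixes M :: "'a::chilbert_space set"
  assumes sub: "is_subspace1 M" and cl: "closed M"
  shows "orth_proj1 M (x + y) = orth_proj1 M x + orth_proj1 M y"
proof (rule orth_proj1_eq[OF sub cl])
  show "orth_proj1 M x + orth_proj1 M y \<in> M"
    using orth_proj1[OF sub cl] subspace1_add[OF sub] by blast
  show "\<forall>q\<in>M. cinner (x + y - (orth_proj1 M x + orth_proj1 M y)) q = 0"
  proof
    fix q assume q: "q \<in> M"
    have e: "x + y - (orth_proj1 M x + orth_proj1 M y) = (x - orth_proj1 M x) + (y - orth_proj1 M y)"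
      by (simp add: algebra_simps)
    show "cinner (x + y - (orth_proj1 M x + orth_proj1 M y)) q = 0"
      unfolding e cinner_add_left
      using orth_proj1(2)[OF sub cl, of x] orth_proj1(2)[OF sub cl, of y] q by simp
  qed
qed

lemma orth_proj1_scale:
  fixes M :: "'a::chilbert_space set"
  assumes sub: "is_subspace1 M" and cl: "closed M"
  shows "orth_proj1 M (c *\<^sub>C x) = c *\<^sub>C orth_proj1 M x"
proof (rule orth_proj1_eq[OF sub cl])
  show "c *\<^sub>C orth_proj1 M x \<in> M"
    using orth_proj1[OF sub cl] subspace1_scale[OF sub] by blast
  show "\<forall>q\<in>M. cinner (c *\<^sub>C x - c *\<^sub>C orth_proj1 M x) q = 0"
  proof
    fix q assume q: "q \<in> M"
    have "c *\<^sub>C x - c *\<^sub>C orth_proj1 M x = c *\<^sub>C (x - orth_proj1 M x)"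
      by (simp add: cv.scale_right_diff_distrib)
    then show "cinner (c *\<^sub>C x - c *\<^sub>C orth_proj1 M x) q = 0"
      using orth_proj1(2)[OF sub cl, of x] q by (simp add: cinner_scaleC_left)
  qed
qed

lemma subspace1_pair_add:
  "is_subspace1 T \<Longrightarrow> (x, f) \<in> T \<Longrightarrow> (y, g) \<in> T \<Longrightarrow> (x + y, f + g) \<in> T"
  using subspace1_add[of T "(x,f)" "(y,g)"] by simp
lemma subspace1_pair_diff:
  "is_subspace1 T \<Longrightarrow> (x, f) \<in> T \<Longrightarrow> (y, g) \<in> T \<Longrightarrow> (x - y, f - g) \<in> T"
  using subspace1_diff[of T "(x,f)" "(y,g)"] by simp
lemma subspace1_pair_scale:
  "is_subspace1 T \<Longrightarrow> (x, f) \<in> T \<Longrightarrow> (c *\<^sub>C x, c *\<^sub>C f) \<in> T"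
  using subspace1_scale[of T "(x,f)" c] by simp
lemma subspace1_pair_zero:
  "is_subspace1 T \<Longrightarrow> (0, 0) \<in> T"
  using subspace1_zero[of T] by (simp add: Pair_zero)

lemma op_part_sub:
  fixes A :: "('a::complex_inner \<times> 'a) set"
  assumes sub: "is_subspace1 A"
  shows "is_subspace1 (op_part A)"
  unfolding is_subspace1_def op_part_def ip2_cinner
  using subspace1_zero[OF sub] subspace1_add[OF sub] subspace1_scale[OF sub]
  by (simp add: cinner_add_left cinner_scaleC_left)

lemma op_part_sv:
  fixes A :: "('a::complex_inner \<times> 'a) set"
  assumes sub: "is_subspace1 A" and "(x, f) \<in> op_part A" "(x, g) \<in> op_part A"
  shows "f = g"
proof -
  have "(x - x, f - g) \<in> op_part A"
    using subspace1_pair_diff[OF op_part_sub[OF sub] assms(2,3)] .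
  then have z: "(0, f - g) \<in> op_part A" by simp
  then have "(0, f - g) \<in> mult_part A" unfolding op_part_def mult_part_def by auto
  then have "ip2 (0, f - g) (0, f - g) = 0" using z unfolding op_part_def by auto
  then have "cinner (f - g) (f - g) = 0" by (simp add: ip2_def)
  then show ?thesis using cinner_self_zero by fastforce
qed

lemma herm_mult:
  fixes T :: "('a::complex_inner \<times> 'a) set"
  assumes "hermitian T" "(0, h) \<in> T" "(x, f) \<in> T"
  shows "cinner h x = 0"
proof -
  have "(0, h) \<in> rel_adjoint T" using assms unfolding hermitian_def by blast
  then show ?thesis using assms(3) unfolding rel_adjoint_def by auto
qed

lemma herm_pair:
  fixes T :: "('a::complex_inner \<times> 'a) set"
  assumes "hermitian T" "(x, f) \<in> T" "(y, g) \<in> T"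
  shows "cinner f y = cinner x g"
proof -
  have "(x, f) \<in> rel_adjoint T" using assms unfolding hermitian_def by blast
  then show ?thesis using assms(3) unfolding rel_adjoint_def by auto
qed

lemma resolvent_S0:
  fixes S :: "('a::chilbert_space \<times> 'a) set"
  assumes sub: "is_subspace1 S" and hS: "hermitian S" and l: "l \<in> resolvent_set S"
    and perp: "\<And>y. y \<in> rel_dom S \<Longrightarrow> cinner w y = 0"
  shows "(0, w) \<in> S"
proof -
  let ?R = "{(l *\<^sub>C x - f, x) | x f. (x, f) \<in> S}"
  have domR: "rel_dom ?R = UNIV" using l unfolding resolvent_set_def Let_def by blast
  have surj: "\<exists>x f. (x, f) \<in> S \<and> v = l *\<^sub>C x - f" for v
  proof -
    have "v \<in> rel_dom ?R" using domR by simp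
    then show ?thesis unfolding rel_dom_def by blast
  qed
  obtain x f where xf: "(x, f) \<in> S" and w: "w = l *\<^sub>C x - f" using surj[of w] by blast
  have fe: "f = l *\<^sub>C x - w" using w by simp
  have xD: "x \<in> rel_dom S" using xf unfolding rel_dom_def by blast
  have wx: "cinner w x = 0" using perp[OF xD] .
  have xw: "cinner x w = 0" using wx cinner_commute[of x w] by simp
  have x0: "x = 0"
  proof (cases "cnj l = l")
    case True
    have key: "cinner x (g - l *\<^sub>C y) = 0" if yg: "(y, g) \<in> S" for y g
    proof -
      have yD: "y \<in> rel_dom S" using yg unfolding rel_dom_def by blast
      have "cinner f y = cinner x g" using herm_pair[OF hS xf yg] .
      moreover have "cinner f y = l * cinner x y"
        unfolding fe using perp[OF yD] True by (simp add: cinner_diff_left cinner_scaleC_left)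
      ultimately show ?thesis by (simp add: cinner_diff_right cinner_scaleC_right)
    qed
    obtain y g where yg: "(y, g) \<in> S" and xv: "x = l *\<^sub>C y - g" using surj[of x] by blast
    have "g - l *\<^sub>C y = - x" using xv by simp
    then have "cinner x (- x) = 0" using key[OF yg] by simp
    then have "cinner x x = 0" by (simp add: cinner_minus_right)
    then show ?thesis by (rule cinner_self_zero)
  next
    case False
    have "cinner f x = cinner x f" using herm_pair[OF hS xf xf] .
    then have "cnj l * cinner x x = l * cinner x x"
      unfolding fe using wx xw by (simp add: cinner_diff_left cinner_diff_right cinner_scaleC_left cinner_scaleC_right)
    then have "(cnj l - l) * cinner x x = 0" by (simp add: algebra_simps)
    then have "cinner x x = 0" using False by simp
    then show ?thesis by (rule cinner_self_zero)
  qed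
  have "(0, - w) \<in> S" using xf x0 fe by simp
  then have "((-1) *\<^sub>C 0, (-1) *\<^sub>C (- w)) \<in> S" by (rule subspace1_pair_scale[OF sub])
  then show ?thesis by (simp add: cv.scale_minus_left scaleC_one)
qed

lemma rel_app0_sub:
  fixes A :: "('a::chilbert_space \<times> 'a) set"
  assumes sub: "is_subspace1 A" and cl: "closed A"
  shows "is_subspace1 (rel_app A 0)" "closed (rel_app A 0)"
proof -
  show "is_subspace1 (rel_app A 0)"
    unfolding is_subspace1_def rel_app_def
    using subspace1_pair_zero[OF sub] subspace1_pair_add[OF sub, of 0 _ 0] subspace1_pair_scale[OF sub, of 0]
    by auto
  have "rel_app A 0 = (\<lambda>g. (0, g)) -` A" unfolding rel_app_def by auto
  moreover have "closed ((\<lambda>g. (0::'a, g)) -` A)"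
    by (rule closed_vimage[OF cl]) (intro continuous_on_Pair continuous_on_const continuous_on_id)
  ultimately show "closed (rel_app A 0)" by simp
qed

lemma op_part_exists:
  fixes A :: "('a::chilbert_space \<times> 'a) set"
  assumes sub: "is_subspace1 A" and cl: "closed A" and x: "x \<in> rel_dom A"
  shows "\<exists>g. (x, g) \<in> op_part A"
proof -
  obtain g' where g': "(x, g') \<in> A" using x unfolding rel_dom_def by blast
  let ?N = "rel_app A 0"
  let ?p = "orth_proj1 ?N g'"
  have pN: "?p \<in> ?N" and pp: "\<forall>q\<in>?N. cinner (g' - ?p) q = 0"
    using orth_proj1[OF rel_app0_sub[OF sub cl]] by auto
  have "(0, ?p) \<in> A" using pN unfolding rel_app_def by simp
  then have "(x - 0, g' - ?p) \<in> A" using subspace1_pair_diff[OF sub g'] by blast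
  then have inA: "(x, g' - ?p) \<in> A" by simp
  have "\<forall>w\<in>mult_part A. ip2 (x, g' - ?p) w = 0"
  proof
    fix w assume "w \<in> mult_part A"
    then obtain h where w: "w = (0, h)" and h: "(0, h) \<in> A" unfolding mult_part_def by blast
    have "h \<in> ?N" using h unfolding rel_app_def by simp
    then show "ip2 (x, g' - ?p) w = 0" using pp w by (simp add: ip2_def)
  qed
  then show ?thesis using inA unfolding op_part_def by blast
qed


lemma rel_dom_sub:
  fixes T :: "('a::complex_inner \<times> 'a) set"
  assumes sub: "is_subspace1 T"
  shows "is_subspace1 (rel_dom T)"
  unfolding is_subspace1_def rel_dom_def
  using subspace1_pair_zero[OF sub] subspace1_pair_add[OF sub] subspace1_pair_scale[OF sub]
  by blast

lemma restrict_sub: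
  fixes R :: "('a::complex_inner \<times> 'a) set"
  assumes "is_subspace1 R" "is_subspace1 D"
  shows "is_subspace1 (rel_restrict R D)"
  using assms unfolding is_subspace1_def rel_restrict_def by (simp add: zero_prod_def)

lemma snd_sub:
  fixes R :: "('a::complex_inner \<times> 'a) set"
  assumes sub: "is_subspace1 R"
  shows "cv.subspace (snd ` R)"
  unfolding cv.subspace_def
proof (intro conjI ballI allI)
  show "0 \<in> snd ` R" using subspace1_zero[OF sub] by force
  fix x y assume "x \<in> snd ` R" "y \<in> snd ` R"
  then obtain a b where "a \<in> R" "b \<in> R" "x = snd a" "y = snd b" by blast
  then show "x + y \<in> snd ` R" using subspace1_add[OF sub, of a b] by force
next
  fix c x assume "x \<in> snd ` R"
  then obtain a where "a \<in> R" "x = snd a" by blast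
  then show "c *\<^sub>C x \<in> snd ` R" using subspace1_scale[OF sub, of a c] by force
qed

lemma perp_sub:
  fixes T :: "'a::complex_inner set"
  assumes sub: "is_subspace1 T"
  shows "cv.subspace {t\<in>T. \<forall>w\<in>W. cinner t w = 0}"
  unfolding cv.subspace_def
  using subspace1_zero[OF sub] subspace1_add[OF sub] subspace1_scale[OF sub]
  by (simp add: cinner_add_left cinner_scaleC_left)

theorem theorem3p6:
  fixes T S A :: "('a::chilbert_space \<times> 'a) set"
  assumes "closed_subspace2 T" "closed_subspace2 S" "closed_subspace2 A"
    and "hermitian T" "hermitian S" "hermitian A"
    and "rel_dom T = rel_dom S" "rel_dom S \<subseteq> rel_dom A"
    and "T = rel_sum S A"
    and "resolvent_set T \<inter> resolvent_set S \<noteq> {}"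
  shows "(finite_rank_operator (rel_restrict (op_part A) (rel_dom T))
            \<longrightarrow> finite_rank_perturbation T S)
       \<and> (finite_rank_perturbation T S
            \<and> reduces (orth_compl1 (rel_app T 0)) S
            \<and> reduces (orth_compl1 (rel_app T 0)) A
            \<longrightarrow> finite_rank_operator (rel_restrict (op_part A) (rel_dom T)))"
proof -
  have subT: "is_subspace1 T" and clT: "closed T"
    using assms(1) unfolding closed_subspace2_def subspace2_iff by auto
  have subS: "is_subspace1 S" and clS: "closed S"
    using assms(2) unfolding closed_subspace2_def subspace2_iff by auto
  have subA: "is_subspace1 A" and clA: "closed A"
    using assms(3) unfolding closed_subspace2_def subspace2_iff by auto
  have hT: "hermitian T" and hS: "hermitian S" and hA: "hermitian A" using assms(4-6) by auto
  have domTS: "rel_dom T = rel_dom S" and domSA: "rel_dom S \<subseteq> rel_dom A" using assms(7,8) by auto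
  have Tsum: "T = rel_sum S A" using assms(9) .
  have subop: "is_subspace1 (op_part A)" using op_part_sub[OF subA] .
  have opA: "z \<in> A" if "z \<in> op_part A" for z using that unfolding op_part_def by auto
  have inT: "(x, f + g) \<in> T" if "(x, f) \<in> S" "(x, g) \<in> A" for x f g
    using that unfolding Tsum rel_sum_def by blast
  have fromT: "\<exists>f g. h = f + g \<and> (x, f) \<in> S \<and> (x, g) \<in> A" if "(x, h) \<in> T" for x h
    using that unfolding Tsum rel_sum_def by blast
  define R where "R = rel_restrict (op_part A) (rel_dom T)"
  have subR: "is_subspace1 R" unfolding R_def using restrict_sub[OF subop rel_dom_sub[OF subT]] .
  have svR: "single_valued_rel R"
    unfolding single_valued_rel_def R_def rel_restrict_def using op_part_sv[OF subA] by auto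
  define P where "P = (\<lambda>z. orth_proj1 T z - orth_proj1 S z)"
  have frp_iff: "finite_rank_perturbation T S \<longleftrightarrow> (\<exists>B. finite B \<and> range P \<subseteq> cv.span B)"
    unfolding finite_rank_perturbation_def pair_minus orth_proj2_eq fin_dim2_iff fin_dim1_span P_def ..
  have fro_iff: "finite_rank_operator R \<longleftrightarrow> (\<exists>B. finite B \<and> snd ` R \<subseteq> cv.span B)"
    unfolding finite_rank_operator_def fin_dim1_span using svR by simp
  show ?thesis unfolding R_def[symmetric]
  proof (intro conjI impI)
    assume "finite_rank_operator R"
    then obtain B0 where fB0: "finite B0" and B0: "snd ` R \<subseteq> cv.span B0" using fro_iff by blast
    from assms(10) obtain l where l: "l \<in> resolvent_set S" by blast
    have A0S: "(0, w) \<in> S" if "(0, w) \<in> A" for w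
    proof (rule resolvent_S0[OF subS hS l])
      fix y assume "y \<in> rel_dom S"
      then obtain g where "(y, g) \<in> A" using domSA unfolding rel_dom_def by blast
      then show "cinner w y = 0" using herm_mult[OF hA that] by blast
    qed
    define \<phi> where "\<phi> x = (THE g. (x, g) \<in> op_part A)" for x
    have phi_eq: "\<phi> x = g" if "(x, g) \<in> op_part A" for x g
      unfolding \<phi>_def using that op_part_sv[OF subA] by (intro the_equality) auto
    have phi: "(x, \<phi> x) \<in> op_part A" if "x \<in> rel_dom T" for x
    proof -
      have "x \<in> rel_dom A" using that domTS domSA by auto
      then obtain g where "(x, g) \<in> op_part A" using op_part_exists[OF subA clA] by blast
      then show ?thesis using phi_eq by simp
    qed
    have phi_add: "\<phi> (x + y) = \<phi> x + \<phi> y" if "x \<in> rel_dom T" "y \<in> rel_dom T" for x y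
      using phi_eq subspace1_pair_add[OF subop phi[OF that(1)] phi[OF that(2)]] by blast
    have phi_scale: "\<phi> (c *\<^sub>C x) = c *\<^sub>C \<phi> x" if "x \<in> rel_dom T" for c x
      using phi_eq subspace1_pair_scale[OF subop phi[OF that]] by blast
    have phi_B0: "\<phi> x \<in> cv.span B0" if "x \<in> rel_dom T" for x
    proof -
      have "(x, \<phi> x) \<in> R" unfolding R_def rel_restrict_def using phi[OF that] that by simp
      then have "\<phi> x \<in> snd ` R" by force
      then show ?thesis using B0 by blast
    qed
    have domT: "fst z \<in> rel_dom T" if "z \<in> T" for z
      using that unfolding rel_dom_def by (metis prod.collapse mem_Collect_eq)
    have domS: "fst z \<in> rel_dom T" if "z \<in> S" for z
      using that domTS unfolding rel_dom_def by (metis prod.collapse mem_Collect_eq)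
    define W where "W = T \<inter> S"
    have subW: "is_subspace1 W" unfolding W_def using subT subS unfolding is_subspace1_def by blast
    have clW: "closed W" unfolding W_def using clT clS by blast
    define VT where "VT = {t\<in>T. \<forall>w\<in>W. cinner t w = 0}"
    define VS where "VS = {t\<in>S. \<forall>w\<in>W. cinner t w = 0}"
    have subVT: "cv.subspace VT" unfolding VT_def by (rule perp_sub[OF subT])
    have subVS: "cv.subspace VS" unfolding VS_def by (rule perp_sub[OF subS])
    have perpW0: "t = 0" if "t \<in> W" "\<forall>w\<in>W. cinner t w = 0" for t
      using that cinner_self_zero by blast
    obtain C1 where fC1: "finite C1" and C1: "VT \<subseteq> cv.span C1"
    proof -
      have "\<exists>C. finite C \<and> VT \<subseteq> cv.span C"
      proof (rule fin_dim_inj[OF subVT, where f="\<lambda>z. \<phi> (fst z)" and B=B0])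
        fix x y assume "x \<in> VT" "y \<in> VT"
        then show "\<phi> (fst (x + y)) = \<phi> (fst x) + \<phi> (fst y)"
          using phi_add domT unfolding VT_def by simp
      next
        fix c x assume "x \<in> VT"
        then show "\<phi> (fst (c *\<^sub>C x)) = c *\<^sub>C \<phi> (fst x)"
          using phi_scale domT unfolding VT_def by simp
      next
        fix t assume tV: "t \<in> VT" and t0: "\<phi> (fst t) = 0"
        obtain x h where t: "t = (x, h)" by (cases t)
        have tT: "(x, h) \<in> T" using tV t unfolding VT_def by simp
        obtain f g where h: "h = f + g" and xf: "(x, f) \<in> S" and xg: "(x, g) \<in> A"
          using fromT[OF tT] by blast
        have "(x, 0) \<in> A" using phi[OF domT[OF tT]] t0 opA t by simp
        then have "(x - x, g - 0) \<in> A" using subspace1_pair_diff[OF subA xg] by blast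
        then have "(0, g) \<in> S" using A0S by simp
        then have "(x + 0, f + g) \<in> S" using subspace1_pair_add[OF subS xf] by blast
        then have "t \<in> W" using tT t h unfolding W_def by simp
        then show "t = 0" using perpW0 tV unfolding VT_def by blast
      next
        show "finite B0" by (rule fB0)
        show "(\<lambda>z. \<phi> (fst z)) ` VT \<subseteq> cv.span B0"
          using phi_B0 domT unfolding VT_def by blast
      qed
      then show ?thesis using that by blast
    qed
    obtain C2 where fC2: "finite C2" and C2: "VS \<subseteq> cv.span C2"
    proof -
      have "\<exists>C. finite C \<and> VS \<subseteq> cv.span C"
      proof (rule fin_dim_inj[OF subVS, where f="\<lambda>z. \<phi> (fst z)" and B=B0])
        fix x y assume "x \<in> VS" "y \<in> VS"
        then show "\<phi> (fst (x + y)) = \<phi> (fst x) + \<phi> (fst y)"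
          using phi_add domS unfolding VS_def by simp
      next
        fix c x assume "x \<in> VS"
        then show "\<phi> (fst (c *\<^sub>C x)) = c *\<^sub>C \<phi> (fst x)"
          using phi_scale domS unfolding VS_def by simp
      next
        fix t assume tV: "t \<in> VS" and t0: "\<phi> (fst t) = 0"
        obtain x f where t: "t = (x, f)" by (cases t)
        have tS: "(x, f) \<in> S" using tV t unfolding VS_def by simp
        have "(x, 0) \<in> A" using phi[OF domS[OF tS]] t0 opA t by simp
        then have "(x, f + 0) \<in> T" using inT[OF tS] by blast
        then have "t \<in> W" using tS t unfolding W_def by simp
        then show "t = 0" using perpW0 tV unfolding VS_def by blast
      next
        show "finite B0" by (rule fB0)
        show "(\<lambda>z. \<phi> (fst z)) ` VS \<subseteq> cv.span B0"
          using phi_B0 domS unfolding VS_def by blast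
      qed
      then show ?thesis using that by blast
    qed
    have "P z \<in> cv.span (C1 \<union> C2)" for z
    proof -
      define t where "t = orth_proj1 T z"
      define s where "s = orth_proj1 S z"
      have tT: "t \<in> T" and tp: "\<forall>q\<in>T. cinner (z - t) q = 0"
        unfolding t_def using orth_proj1[OF subT clT] by auto
      have sS: "s \<in> S" and sp: "\<forall>q\<in>S. cinner (z - s) q = 0"
        unfolding s_def using orth_proj1[OF subS clS] by auto
      define t2 where "t2 = t - orth_proj1 W t"
      define s2 where "s2 = s - orth_proj1 W s"
      have PWt: "orth_proj1 W t \<in> W" "\<forall>q\<in>W. cinner t2 q = 0"
        unfolding t2_def using orth_proj1[OF subW clW] by auto
      have PWs: "orth_proj1 W s \<in> W" "\<forall>q\<in>W. cinner s2 q = 0"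
        unfolding s2_def using orth_proj1[OF subW clW] by auto
      have "t2 \<in> T" unfolding t2_def using subspace1_diff[OF subT tT] PWt(1) unfolding W_def by blast
      then have t2V: "t2 \<in> VT" unfolding VT_def using PWt(2) by blast
      have "s2 \<in> S" unfolding s2_def using subspace1_diff[OF subS sS] PWs(1) unfolding W_def by blast
      then have s2V: "s2 \<in> VS" unfolding VS_def using PWs(2) by blast
      have Pz: "P z = t - s" unfolding P_def t_def s_def ..
      have uperp: "cinner (P z) q = 0" if "q \<in> W" for q
      proof -
        have e: "P z = (z - s) - (z - t)" unfolding Pz by (simp add: algebra_simps)
        have "cinner (z - s) q = 0" "cinner (z - t) q = 0" using tp sp that unfolding W_def by auto
        then show ?thesis unfolding e cinner_diff_left by simp
      qed
      define d where "d = orth_proj1 W t - orth_proj1 W s"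
      have dW: "d \<in> W" unfolding d_def using subspace1_diff[OF subW PWt(1) PWs(1)] .
      have deq: "d = P z - t2 + s2" unfolding d_def Pz t2_def s2_def by (simp add: algebra_simps)
      have "cinner d d = cinner (P z) d - cinner t2 d + cinner s2 d"
        by (subst (1) deq) (simp add: cinner_add_left cinner_diff_left)
      also have "\<dots> = 0" using uperp[OF dW] PWt(2) PWs(2) dW by simp
      finally have "d = 0" using cinner_self_zero by blast
      then have "P z = t2 - s2" using deq by (simp add: algebra_simps)
      moreover have "t2 \<in> cv.span (C1 \<union> C2)" using t2V C1 cv.span_mono[of C1 "C1 \<union> C2"] by blast
      moreover have "s2 \<in> cv.span (C1 \<union> C2)" using s2V C2 cv.span_mono[of C2 "C1 \<union> C2"] by blast
      ultimately show ?thesis using cv.span_diff by simp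
    qed
    then show "finite_rank_perturbation T S" unfolding frp_iff using fC1 fC2 by blast
  next
    assume H: "finite_rank_perturbation T S \<and> reduces (orth_compl1 (rel_app T 0)) S
            \<and> reduces (orth_compl1 (rel_app T 0)) A"
    then obtain B where fB: "finite B" and B: "range P \<subseteq> cv.span B" using frp_iff by blast
    define M where "M = orth_compl1 (rel_app T 0)"
    have subM: "is_subspace1 M" and clM: "closed M"
      and redP: "\<forall>(x, f)\<in>A. (orth_proj1 M x, orth_proj1 M f) \<in> A"
      using H unfolding reduces_def M_def by auto
    define G where "G = snd ` R"
    have GM: "g \<in> M" if gG0: "g \<in> G" for g
    proof -
      obtain z where z: "z \<in> R" "g = snd z" using gG0 unfolding G_def by blast
      obtain x where xg: "(x, g) \<in> op_part A" "x \<in> rel_dom T"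
        using z unfolding R_def rel_restrict_def by (cases z) auto
      have xgA: "(x, g) \<in> A" using opA[OF xg(1)] .
      obtain f' where xf': "(x, f') \<in> T" using xg(2) unfolding rel_dom_def by auto
      have xM: "x \<in> M" unfolding M_def orth_compl1_def
      proof (intro CollectI ballI)
        fix h assume "h \<in> rel_app T 0"
        then have "(0, h) \<in> T" unfolding rel_app_def by simp
        then have "cinner h x = 0" using herm_mult[OF hT _ xf'] by simp
        then show "cinner x h = 0" using cinner_commute[of x h] by simp
      qed
      have Px: "orth_proj1 M x = x" by (rule orth_proj1_id[OF subM clM xM])
      define Pg where "Pg = orth_proj1 M g"
      have "(x, Pg) \<in> A" using redP xgA Px unfolding Pg_def by fastforce
      then have "(x - x, g - Pg) \<in> A" using subspace1_pair_diff[OF subA xgA] by blast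
      then have "(0, g - Pg) \<in> mult_part A" unfolding mult_part_def by simp
      then have "ip2 (x, g) (0, g - Pg) = 0" using xg(1) unfolding op_part_def by blast
      then have c1: "cinner g (g - Pg) = 0" by (simp add: ip2_def)
      have PgM: "Pg \<in> M" unfolding Pg_def using orth_proj1[OF subM clM] by blast
      have "cinner (g - Pg) Pg = 0" unfolding Pg_def using orth_proj1(2)[OF subM clM, of g] PgM
        unfolding Pg_def by blast
      then have c2: "cinner Pg (g - Pg) = 0" using cinner_commute[of Pg "g - Pg"] by simp
      have "cinner (g - Pg) (g - Pg) = 0" using c1 c2 by (simp add: cinner_diff_left)
      then have "g - Pg = 0" by (rule cinner_self_zero)
      then show "g \<in> M" using PgM by simp
    qed
    define \<psi> where "\<psi> g = (0, g) - orth_proj1 S (0, g)" for g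
    have psi_add: "\<psi> (x + y) = \<psi> x + \<psi> y" for x y
    proof -
      have "(0, x + y) = (0, x) + (0::'a, y)" by simp
      then show ?thesis unfolding \<psi>_def using orth_proj1_add[OF subS clS, of "(0,x)" "(0,y)"]
        by (simp add: algebra_simps)
    qed
    have psi_scale: "\<psi> (c *\<^sub>C x) = c *\<^sub>C \<psi> x" for c x
    proof -
      have "(0, c *\<^sub>C x) = c *\<^sub>C (0::'a, x)" by simp
      then show ?thesis unfolding \<psi>_def using orth_proj1_scale[OF subS clS, of c "(0,x)"]
        by (simp add: cv.scale_right_diff_distrib)
    qed
    have "\<exists>C. finite C \<and> G \<subseteq> cv.span C"
    proof (rule fin_dim_inj[where f=\<psi> and B=B])
      show "cv.subspace G" unfolding G_def by (rule snd_sub[OF subR])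
      show "\<psi> (x + y) = \<psi> x + \<psi> y" for x y by (rule psi_add)
      show "\<psi> (c *\<^sub>C x) = c *\<^sub>C \<psi> x" for c x by (rule psi_scale)
      show "finite B" by (rule fB)
    next
      fix g assume gG: "g \<in> G" and g0: "\<psi> g = 0"
      have "orth_proj1 S (0, g) = (0, g)" using g0 unfolding \<psi>_def by simp
      then have "(0, g) \<in> S" using orth_proj1(1)[OF subS clS, of "(0,g)"] by simp
      then have "(0, g + 0) \<in> T" using inT subspace1_pair_zero[OF subA] by blast
      then have "g \<in> rel_app T 0" unfolding rel_app_def by simp
      then have "cinner g g = 0" using GM[OF gG] unfolding M_def orth_compl1_def by blast
      then show "g = 0" by (rule cinner_self_zero)
    next
      show "\<psi> ` G \<subseteq> cv.span B"
      proof
        fix v assume "v \<in> \<psi> ` G"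
        then obtain g where gG: "g \<in> G" and v: "v = \<psi> g" by blast
        obtain z where z: "z \<in> R" "g = snd z" using gG unfolding G_def by blast
        obtain x where xg: "(x, g) \<in> op_part A" "x \<in> rel_dom T"
          using z unfolding R_def rel_restrict_def by (cases z) auto
        obtain f where xf: "(x, f) \<in> S" using xg(2) domTS unfolding rel_dom_def by auto
        have tT: "(x, f + g) \<in> T" using inT[OF xf opA[OF xg(1)]] .
        have "(x, f + g) = (x, f) + (0, g)" by simp
        then have PS: "orth_proj1 S (x, f + g) = (x, f) + orth_proj1 S (0, g)"
          using orth_proj1_add[OF subS clS, of "(x,f)" "(0,g)"] orth_proj1_id[OF subS clS xf] by simp
        have "P (x, f + g) = (x, f + g) - ((x, f) + orth_proj1 S (0, g))"
          unfolding P_def PS orth_proj1_id[OF subT clT tT] ..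
        also have "\<dots> = \<psi> g" unfolding \<psi>_def by simp
        finally have "v = P (x, f + g)" using v by simp
        then show "v \<in> cv.span B" using B by blast
      qed
    qed
    then have "\<exists>C. finite C \<and> snd ` R \<subseteq> cv.span C" unfolding G_def .
    then show "finite_rank_operator R" using fro_iff by simp
  qed
qed

end
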